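(* Let $F$ be a Banach lattice, $H$ a Banach space and $T:F\to H$ bounded. The following are equivalent: (i) $T$ is DNS; (ii) there is no almost disjoint sequence $(f_n)\subset\mathrm{S}_F$ with $\|Tf_n\|\to0$; (iii) there is no non-dispersed closed subspace $E\subset F$ such that $T|_E$ is compact; (iv) there is no non-dispersed closed subspace $E\subset F$ such that $T|_E$ is strictly singular.
   Context: $\mathrm{S}_F$ is the unit sphere. A sequence $(e_n)\subset\mathrm{S}_F$ is almost disjoint if there is a disjoint sequence $(f_n)\subset F$ ($|f_n|\wedge|f_m|=0$, $n\ne m$) with $\|e_n-f_n\|\to0$. A closed subspace $E$ is dispersed if $\mathrm{S}_E$ contains no almost disjoint sequence. An operator is strictly singular if it is not bounded below on any infinite-dimensional subspace. $T$ is DNS if for every disjoint sequence of nonzero vectors $(f_n)$, $T$ restricted to $\overline{\mathrm{span}}\{f_n\}$ is not strictly singular. *)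

theory Defs
  imports "HOL-Analysis.Analysis"
begin

definition lmod :: "'a::{lattice, ab_group_add} \<Rightarrow> 'a" where
  "lmod x = sup x (- x)"

class banach_lattice = banach + ordered_real_vector + lattice +
  assumes lattice_norm_mono: "sup x (- x) \<le> sup y (- y) \<Longrightarrow> norm x \<le> norm y"

definition disjoint_seq :: "(nat \<Rightarrow> 'a::banach_lattice) \<Rightarrow> bool" where
  "disjoint_seq f \<longleftrightarrow> (\<forall>n m. n \<noteq> m \<longrightarrow> inf (lmod (f n)) (lmod (f m)) = 0)"

definition almost_disjoint :: "(nat \<Rightarrow> 'a::banach_lattice) \<Rightarrow> bool" where
  "almost_disjoint e \<longleftrightarrow> (\<forall>n. e n \<in> sphere 0 1) \<and>
     (\<exists>f. disjoint_seq f \<and> (\<lambda>n. norm (e n - f n)) \<longlonglongrightarrow> 0)"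

definition closed_subspace :: "'a::real_normed_vector set \<Rightarrow> bool" where
  "closed_subspace E \<longleftrightarrow> subspace E \<and> closed E"

definition dispersed :: "'a::banach_lattice set \<Rightarrow> bool" where
  "dispersed E \<longleftrightarrow> \<not> (\<exists>e. (\<forall>n. e n \<in> E) \<and> almost_disjoint e)"

definition infinite_dimensional :: "'a::real_vector set \<Rightarrow> bool" where
  "infinite_dimensional Y \<longleftrightarrow> \<not> (\<exists>B. finite B \<and> Y \<subseteq> span B)"

definition bounded_below_on :: "'a::real_normed_vector set \<Rightarrow> ('a \<Rightarrow> 'b::real_normed_vector) \<Rightarrow> bool" where
  "bounded_below_on Y T \<longleftrightarrow> (\<exists>c>0. \<forall>y\<in>Y. c * norm y \<le> norm (T y))"

definition strictly_singular_on :: "'a::real_normed_vector set \<Rightarrow> ('a \<Rightarrow> 'b::real_normed_vector) \<Rightarrow> bool" where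
  "strictly_singular_on E T \<longleftrightarrow>
     (\<forall>Y. subspace Y \<and> Y \<subseteq> E \<and> infinite_dimensional Y \<longrightarrow> \<not> bounded_below_on Y T)"

definition compact_on :: "'a::real_normed_vector set \<Rightarrow> ('a \<Rightarrow> 'b::real_normed_vector) \<Rightarrow> bool" where
  "compact_on E T \<longleftrightarrow> compact (closure (T ` (E \<inter> cball 0 1)))"

definition DNS :: "('a::banach_lattice \<Rightarrow> 'b::real_normed_vector) \<Rightarrow> bool" where
  "DNS T \<longleftrightarrow> (\<forall>f. disjoint_seq f \<and> (\<forall>n. f n \<noteq> 0) \<longrightarrow>
      \<not> strictly_singular_on (closure (span (range f))) T)"

end

theory Submission
  imports Defs "HOL-Library.Lattice_Algebras"
begin

context banach_lattice begin
subclass lattice_ab_group_add ..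
end


lemma lmod_ge0: "0 \<le> lmod (x::'a::banach_lattice)"
proof -
  have "x \<le> lmod x" "- x \<le> lmod x" by (auto simp: lmod_def)
  then have "x + - x \<le> lmod x + lmod x" by (rule add_mono)
  then show ?thesis by simp
qed

lemma lmod_minus[simp]: "lmod (- x) = lmod (x::'a::banach_lattice)"
  by (simp add: lmod_def sup_commute)

lemma lmod_zero[simp]: "lmod (0::'a::banach_lattice) = 0"
  by (simp add: lmod_def)

lemma lmod_triangle: "lmod (x + y) \<le> lmod x + lmod (y::'a::banach_lattice)"
proof -
  have "x + y \<le> lmod x + lmod y" by (intro add_mono) (auto simp: lmod_def)
  moreover have "- (x + y) \<le> lmod x + lmod y" 
    using add_mono[of "-x" "lmod x" "-y" "lmod y"] by (auto simp: lmod_def)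
  ultimately show ?thesis by (simp add: lmod_def)
qed

lemma lmod_norm: "lmod x \<le> lmod y \<Longrightarrow> norm x \<le> norm (y::'a::banach_lattice)"
  using lattice_norm_mono by (simp add: lmod_def)

lemma scaleR_sup_pos: "0 < c \<Longrightarrow> c *\<^sub>R sup a b = sup (c *\<^sub>R a) (c *\<^sub>R (b::'a::banach_lattice))"
proof (rule antisym)
  assume c: "0 < c"
  show "sup (c *\<^sub>R a) (c *\<^sub>R b) \<le> c *\<^sub>R sup a b"
    using c by (auto intro!: scaleR_left_mono)
  let ?s = "sup (c *\<^sub>R a) (c *\<^sub>R b)"
  have "a \<le> (1/c) *\<^sub>R ?s"
    using scaleR_left_mono[of "c *\<^sub>R a" ?s "1/c"] c by simp
  moreover have "b \<le> (1/c) *\<^sub>R ?s"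
    using scaleR_left_mono[of "c *\<^sub>R b" ?s "1/c"] c by simp
  ultimately have "sup a b \<le> (1/c) *\<^sub>R ?s" by simp
  then show "c *\<^sub>R sup a b \<le> ?s"
    using scaleR_left_mono[of "sup a b" "(1/c) *\<^sub>R ?s" c] c by simp
qed

lemma scaleR_inf_pos: "0 < c \<Longrightarrow> c *\<^sub>R inf a b = inf (c *\<^sub>R a) (c *\<^sub>R (b::'a::banach_lattice))"
proof (rule antisym)
  assume c: "0 < c"
  show "c *\<^sub>R inf a b \<le> inf (c *\<^sub>R a) (c *\<^sub>R b)"
    using c by (auto intro!: scaleR_left_mono)
  let ?s = "inf (c *\<^sub>R a) (c *\<^sub>R b)"
  have "(1/c) *\<^sub>R ?s \<le> a"
    using scaleR_left_mono[of ?s "c *\<^sub>R a" "1/c"] c by simp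
  moreover have "(1/c) *\<^sub>R ?s \<le> b"
    using scaleR_left_mono[of ?s "c *\<^sub>R b" "1/c"] c by simp
  ultimately have "(1/c) *\<^sub>R ?s \<le> inf a b" by simp
  then show "?s \<le> c *\<^sub>R inf a b"
    using scaleR_left_mono[of "(1/c) *\<^sub>R ?s" "inf a b" c] c by simp
qed

lemma lmod_scaleR_pos: "0 < c \<Longrightarrow> lmod (c *\<^sub>R x) = c *\<^sub>R lmod (x::'a::banach_lattice)"
  by (simp add: lmod_def scaleR_sup_pos)

lemma lmod_scaleR: "lmod (c *\<^sub>R x) = \<bar>c\<bar> *\<^sub>R lmod (x::'a::banach_lattice)"
proof -
  consider "c = 0" | "c > 0" | "c < 0" by linarith
  then show ?thesis
  proof cases
    case 3
    have "lmod (c *\<^sub>R x) = lmod ((-c) *\<^sub>R (-x))" by simp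
    also have "\<dots> = (-c) *\<^sub>R lmod (-x)" using 3 by (intro lmod_scaleR_pos) simp
    finally show ?thesis using 3 by simp
  qed (auto simp: lmod_scaleR_pos)
qed

lemma inf_add_le: 
  fixes a b c :: "'a::banach_lattice"
  assumes "0 \<le> a" "0 \<le> b" "0 \<le> c"
  shows "inf a (b + c) \<le> inf a b + inf a c"
proof -
  let ?d = "inf a (b + c)"
  have "?d - inf a b = sup (?d - a) (?d - b)"
    by (simp add: diff_inf_eq_sup add_sup_distrib_left)
  also have "\<dots> \<le> inf a c"
  proof (rule sup_least)
    have "?d - a \<le> 0" by simp
    also have "0 \<le> inf a c" using assms by simp
    finally show "?d - a \<le> inf a c" .
    have "?d - b \<le> c" 
      by (metis add.commute diff_le_eq inf.cobounded2)
    moreover have "?d - b \<le> a"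
      using assms(2) by (metis diff_le_eq inf.coboundedI1 add_increasing2 order_refl)
    ultimately show "?d - b \<le> inf a c" by simp
  qed
  finally have "?d - inf a b \<le> inf a c" .
  then show ?thesis by (metis diff_le_eq add.commute)
qed

lemma inf_pos_zero_mono:
  fixes a b c :: "'a::banach_lattice"
  assumes "0 \<le> a" "0 \<le> c" "c \<le> b" "inf a b = 0"
  shows "inf a c = 0"
proof (rule antisym)
  have "inf a c \<le> inf a b" using assms(3) by (simp add: inf.coboundedI2)
  then show "inf a c \<le> 0" using assms(4) by simp
  show "0 \<le> inf a c" using assms by simp
qed

lemma inf_scale_zero:
  fixes a b :: "'a::banach_lattice"
  assumes "0 \<le> a" "0 \<le> b" "inf a b = 0" "0 \<le> p"
  shows "inf (p *\<^sub>R a) b = 0"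
proof -
  define q where "q = max p 1"
  have q: "q > 0" "p \<le> q" "1 \<le> q" by (auto simp: q_def)
  have "p *\<^sub>R a \<le> q *\<^sub>R a" using q assms by (simp add: scaleR_right_mono)
  have "b \<le> q *\<^sub>R b" using q assms scaleR_right_mono[of 1 q b] by simp
  have "inf (p *\<^sub>R a) b \<le> inf (q *\<^sub>R a) (q *\<^sub>R b)"
    using \<open>p *\<^sub>R a \<le> q *\<^sub>R a\<close> \<open>b \<le> q *\<^sub>R b\<close> by (meson inf_mono)
  also have "\<dots> = q *\<^sub>R inf a b" by (rule scaleR_inf_pos[OF q(1), symmetric])
  also have "\<dots> = 0" using assms by simp
  finally show ?thesis using assms by (intro antisym) (auto intro: scaleR_nonneg_nonneg)
qed

lemma inf_lmod_scale_zero: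
  fixes x y :: "'a::banach_lattice"
  assumes "inf (lmod x) (lmod y) = 0"
  shows "inf (lmod (s *\<^sub>R x)) (lmod (t *\<^sub>R y)) = 0"
proof -
  have h1: "inf (\<bar>s\<bar> *\<^sub>R lmod x) (lmod y) = 0"
    using inf_scale_zero[OF lmod_ge0 lmod_ge0 assms] by simp
  have nn: "0 \<le> \<bar>s\<bar> *\<^sub>R lmod x" by (simp add: lmod_ge0 scaleR_nonneg_nonneg)
  have h2: "inf (\<bar>t\<bar> *\<^sub>R lmod y) (\<bar>s\<bar> *\<^sub>R lmod x) = 0"
    by (rule inf_scale_zero[OF lmod_ge0 nn]) (use h1 in \<open>auto simp: inf_commute\<close>)
  then show ?thesis by (simp add: lmod_scaleR inf_commute)
qed

lemma inf_sum_zero: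
  fixes w :: "'a::banach_lattice"
  assumes "finite F" "0 \<le> w" "\<And>k. k \<in> F \<Longrightarrow> 0 \<le> p k \<and> inf (p k) w = 0"
  shows "inf (\<Sum>k\<in>F. p k) w = 0"
  using assms
proof (induction F rule: finite_induct)
  case empty then show ?case by (simp add: inf_absorb1)
next
  case (insert k F)
  have IH: "inf (\<Sum>k\<in>F. p k) w = 0" using insert by auto
  have pk: "0 \<le> p k" "inf (p k) w = 0" using insert by auto
  have S0: "0 \<le> (\<Sum>k\<in>F. p k)" using insert by (auto intro: sum_nonneg)
  have "inf w (p k + (\<Sum>k\<in>F. p k)) \<le> inf w (p k) + inf w (\<Sum>k\<in>F. p k)"
    by (rule inf_add_le) (use insert pk S0 in auto)
  also have "\<dots> = 0" using IH pk by (simp add: inf_commute)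
  finally have "inf (p k + (\<Sum>k\<in>F. p k)) w \<le> 0" by (simp add: inf_commute)
  moreover have "0 \<le> inf (p k + (\<Sum>k\<in>F. p k)) w" using pk S0 insert by simp
  ultimately have "inf (p k + (\<Sum>k\<in>F. p k)) w = 0" by (rule antisym)
  then show ?case using insert by simp
qed

lemma lmod_sum: "finite F \<Longrightarrow> lmod (\<Sum>k\<in>F. x k) \<le> (\<Sum>k\<in>F. lmod (x k :: 'a::banach_lattice))"
proof (induction F rule: finite_induct)
  case empty then show ?case by simp
next
  case (insert k F)
  have "lmod (\<Sum>k\<in>insert k F. x k) = lmod (x k + (\<Sum>k\<in>F. x k))" using insert by simp
  also have "\<dots> \<le> lmod (x k) + lmod (\<Sum>k\<in>F. x k)" by (rule lmod_triangle)
  also have "\<dots> \<le> lmod (x k) + (\<Sum>k\<in>F. lmod (x k))" using insert by (intro add_left_mono) simp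
  finally show ?case using insert by simp
qed

lemma disjoint_sums:
  fixes f :: "nat \<Rightarrow> 'a::banach_lattice"
  assumes "disjoint_seq f" "finite A" "finite B" "A \<inter> B = {}"
  shows "inf (lmod (\<Sum>k\<in>A. a k *\<^sub>R f k)) (lmod (\<Sum>j\<in>B. b j *\<^sub>R f j)) = 0"
proof -
  have pair: "inf (lmod (a k *\<^sub>R f k)) (lmod (b j *\<^sub>R f j)) = 0" if "k \<in> A" "j \<in> B" for k j
  proof -
    have "k \<noteq> j" using that assms(4) by auto
    then show ?thesis using assms(1) by (intro inf_lmod_scale_zero) (auto simp: disjoint_seq_def)
  qed
  have one: "inf (lmod (a k *\<^sub>R f k)) (lmod (\<Sum>j\<in>B. b j *\<^sub>R f j)) = 0" if "k \<in> A" for k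
  proof -
    have "inf (\<Sum>j\<in>B. lmod (b j *\<^sub>R f j)) (lmod (a k *\<^sub>R f k)) = 0"
      using pair that assms by (intro inf_sum_zero) (auto simp: lmod_ge0 inf_commute)
    then have "inf (lmod (a k *\<^sub>R f k)) (\<Sum>j\<in>B. lmod (b j *\<^sub>R f j)) = 0"
      by (simp add: inf_commute)
    then show ?thesis
      by (rule inf_pos_zero_mono[OF lmod_ge0 lmod_ge0 lmod_sum[OF assms(3)]])
  qed
  have "inf (\<Sum>k\<in>A. lmod (a k *\<^sub>R f k)) (lmod (\<Sum>j\<in>B. b j *\<^sub>R f j)) = 0"
    using one assms by (intro inf_sum_zero) (auto simp: lmod_ge0)
  then have "inf (lmod (\<Sum>j\<in>B. b j *\<^sub>R f j)) (\<Sum>k\<in>A. lmod (a k *\<^sub>R f k)) = 0"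
    by (simp add: inf_commute)
  then have "inf (lmod (\<Sum>j\<in>B. b j *\<^sub>R f j)) (lmod (\<Sum>k\<in>A. a k *\<^sub>R f k)) = 0"
    by (rule inf_pos_zero_mono[OF lmod_ge0 lmod_ge0 lmod_sum[OF assms(2)]])
  then show ?thesis by (simp add: inf_commute)
qed

lemma lmod_disj_le:
  fixes x y :: "'a::banach_lattice"
  assumes "inf (lmod x) (lmod y) = 0"
  shows "lmod x \<le> lmod (x + y)"
proof -
  have "lmod x = lmod ((x + y) + (- y))" by simp
  also have "\<dots> \<le> lmod (x + y) + lmod y" using lmod_triangle[of "x+y" "-y"] by simp
  finally have 1: "lmod x - lmod y \<le> lmod (x + y)" by (simp add: diff_le_eq)
  have 2: "0 \<le> lmod (x + y)" by (rule lmod_ge0)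
  have "lmod x = lmod x - inf (lmod x) (lmod y)" using assms by simp
  also have "\<dots> = sup (lmod x - lmod x) (lmod x - lmod y)"
    by (simp add: diff_inf_eq_sup add_sup_distrib_left)
  also have "\<dots> \<le> lmod (x + y)" using 1 2 by simp
  finally show ?thesis .
qed

lemma coeff_bound:
  fixes f :: "nat \<Rightarrow> 'a::banach_lattice"
  assumes "disjoint_seq f" "finite F" "k \<in> F"
  shows "norm (a k *\<^sub>R f k) \<le> norm (\<Sum>j\<in>F. a j *\<^sub>R f j)"
proof -
  have eq: "(\<Sum>j\<in>F. a j *\<^sub>R f j) = (\<Sum>j\<in>{k}. a j *\<^sub>R f j) + (\<Sum>j\<in>F-{k}. a j *\<^sub>R f j)"
    using assms by (simp add: sum.remove)
  have d: "inf (lmod (\<Sum>j\<in>{k}. a j *\<^sub>R f j)) (lmod (\<Sum>j\<in>F-{k}. a j *\<^sub>R f j)) = 0"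
    using assms by (intro disjoint_sums) auto
  have "lmod (a k *\<^sub>R f k) \<le> lmod (\<Sum>j\<in>F. a j *\<^sub>R f j)"
    unfolding eq using lmod_disj_le[OF d] by simp
  then show ?thesis by (rule lmod_norm)
qed

lemma geo_interval: "(\<Sum>k\<in>{N..<N+n}. (1/2::real)^k) = 2*(1/2)^N - 2*(1/2)^(N+n)"
proof (induction n)
  case 0 then show ?case by simp
next
  case (Suc n)
  have "(\<Sum>k\<in>{N..<N+Suc n}. (1/2::real)^k) = (\<Sum>k\<in>{N..<N+n}. (1/2::real)^k) + (1/2)^(N+n)"
    by (simp add: sum.atLeastLessThan_Suc)
  also have "\<dots> = 2*(1/2)^N - 2*(1/2)^(N+Suc n)"
  proof -
    have "(1/2::real)^(N+Suc n) = (1/2)^(N+n) / 2" by simp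
    then show ?thesis using Suc by simp
  qed
  finally show ?case .
qed

lemma geo_bound:
  assumes "finite F" "F \<subseteq> {N..}"
  shows "(\<Sum>k\<in>F. (1/2::real)^k) \<le> 2*(1/2)^N"
proof -
  define m where "m = Suc (Max (insert N F))"
  have "\<forall>k\<in>F. k \<le> Max (insert N F)" using assms by auto
  moreover have "N \<le> Max (insert N F)" using assms by auto
  ultimately have "F \<subseteq> {N..<m}" using assms(2) by (auto simp: m_def less_Suc_eq_le)
  moreover have "N + (m - N) = m" using \<open>N \<le> Max (insert N F)\<close> by (simp add: m_def)
  ultimately have "F \<subseteq> {N..<N + (m - N)}" by simp
  then have "(\<Sum>k\<in>F. (1/2::real)^k) \<le> (\<Sum>k\<in>{N..<N+(m-N)}. (1/2)^k)" by (intro sum_mono2) auto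
  also have "\<dots> \<le> 2*(1/2)^N" by (simp add: geo_interval)
  finally show ?thesis .
qed

lemma subseq_choose:
  fixes P :: "nat \<Rightarrow> nat \<Rightarrow> bool"
  assumes "\<And>k. eventually (\<lambda>n. P k n) sequentially"
  shows "\<exists>r. strict_mono r \<and> (\<forall>k. P k (r k))"
proof -
  have "\<forall>k. \<exists>M. \<forall>n\<ge>M. P k n" using assms by (simp add: eventually_sequentially)
  then obtain M where M: "\<And>k n. n \<ge> M k \<Longrightarrow> P k n" by metis
  define r where "r k = (\<Sum>i\<le>k. M i) + k" for k :: nat
  have "strict_mono r" unfolding strict_mono_Suc_iff r_def by simp
  moreover have "r k \<ge> M k" for k 
    unfolding r_def using member_le_sum[of k "{..k}" M] by auto
  ultimately show ?thesis using M by blast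
qed

lemma span_image_sum:
  assumes "x \<in> span (g ` I)"
  shows "\<exists>F a. finite F \<and> F \<subseteq> I \<and> x = (\<Sum>k\<in>F. a k *\<^sub>R g k)"
proof -
  from assms obtain t r where t: "finite t" "t \<subseteq> g ` I" "x = (\<Sum>v\<in>t. r v *\<^sub>R v)"
    by (auto simp: span_explicit)
  define F where "F = inv_into I g ` t"
  have gi: "\<And>v. v \<in> t \<Longrightarrow> g (inv_into I g v) = v" using t(2) by (auto simp: f_inv_into_f)
  have inj: "inj_on g F" unfolding F_def by (rule inj_onI) (auto simp: gi)
  have img: "g ` F = t" unfolding F_def using gi by (force simp: image_image)
  have "F \<subseteq> I" unfolding F_def using t(2) by (auto intro: inv_into_into)
  have "(\<Sum>k\<in>F. r (g k) *\<^sub>R g k) = (\<Sum>v\<in>g ` F. r v *\<^sub>R v)" using inj by (simp add: sum.reindex)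
  then show ?thesis using t img \<open>F \<subseteq> I\<close> F_def
    by (intro exI[of _ F] exI[of _ "\<lambda>k. r (g k)"]) auto
qed

lemma subspace_closure':
  fixes S :: "'a::real_normed_vector set"
  assumes S: "subspace S" shows "subspace (closure S)"
  unfolding subspace_def
proof (intro conjI ballI allI)
  show "0 \<in> closure S" using S closure_subset subspace_0 by blast
  fix x y assume "x \<in> closure S" "y \<in> closure S"
  then obtain xs ys where "\<forall>n. xs n \<in> S" "xs \<longlonglongrightarrow> x" "\<forall>n. ys n \<in> S" "ys \<longlonglongrightarrow> y"
    by (auto simp: closure_sequential)
  then show "x + y \<in> closure S" unfolding closure_sequential
    by (intro exI[of _ "\<lambda>n. xs n + ys n"]) (auto intro: tendsto_add subspace_add[OF S])
next
  fix c x assume "x \<in> closure S"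
  then obtain xs where "\<forall>n. xs n \<in> S" "xs \<longlonglongrightarrow> x"
    by (auto simp: closure_sequential)
  then show "c *\<^sub>R x \<in> closure S" unfolding closure_sequential
    by (intro exI[of _ "\<lambda>n. c *\<^sub>R xs n"]) (auto intro: tendsto_scaleR subspace_scale[OF S])
qed

lemma infdist_key:
  fixes S :: "'a::real_normed_vector set"
  assumes s: "s \<in> span S"
  shows "\<bar>t\<bar> * infdist b (span S) \<le> norm (s + t *\<^sub>R b)"
proof (cases "t = 0")
  case True then show ?thesis by simp
next
  case False
  have 1: "(-(1/t)) *\<^sub>R s \<in> span S" by (intro span_scale s)
  have 2: "infdist b (span S) \<le> dist b ((-(1/t)) *\<^sub>R s)" by (rule infdist_le[OF 1])
  have 3: "dist b ((-(1/t)) *\<^sub>R s) = norm ((1/t) *\<^sub>R (s + t *\<^sub>R b))" 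
    using False by (simp add: dist_norm algebra_simps)
  have 4: "norm ((1/t) *\<^sub>R (s + t *\<^sub>R b)) = norm (s + t *\<^sub>R b) / \<bar>t\<bar>" by simp
  have "infdist b (span S) \<le> norm (s + t *\<^sub>R b) / \<bar>t\<bar>" using 2 3 4 by simp
  then show ?thesis using False by (simp add: pos_le_divide_eq mult.commute)
qed

lemma closed_span_finite:
  fixes B :: "'a::real_normed_vector set"
  assumes "finite B" shows "closed (span B)"
  using assms
proof (induction B rule: finite_induct)
  case empty then show ?case by simp
next
  case (insert b S)
  show ?case
  proof (cases "b \<in> span S")
    case True
    then have "span (insert b S) = span S" by (simp add: span_redundant)
    then show ?thesis using insert by simp
  next
    case False
    define d where "d = infdist b (span S)"
    have ne: "span S \<noteq> {}" using span_zero by blast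
    have d: "d > 0" unfolding d_def by (rule infdist_pos_not_in_closed[OF insert.IH ne False])
    have key: "\<bar>t\<bar> * d \<le> norm (s + t *\<^sub>R b)" if "s \<in> span S" for s t
      unfolding d_def by (rule infdist_key[OF that])
    show ?thesis unfolding closed_sequential_limits
    proof (intro allI impI, elim conjE)
      fix x l assume xs: "\<forall>n. x n \<in> span (insert b S)" and lim: "x \<longlonglongrightarrow> l"
      have "\<forall>n. \<exists>t. x n - t *\<^sub>R b \<in> span S" using xs by (simp add: span_insert)
      then obtain t where t: "\<And>n. x n - t n *\<^sub>R b \<in> span S" by metis
      have "Cauchy t"
      proof (rule metric_CauchyI)
        fix e :: real assume e: "e > 0"
        from lim have "Cauchy x" by (rule LIMSEQ_imp_Cauchy)
        moreover have "e * d > 0" using e d by simp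
        ultimately obtain M where M: "\<forall>m\<ge>M. \<forall>n\<ge>M. dist (x m) (x n) < e * d" 
          using metric_CauchyD by blast
        show "\<exists>M. \<forall>m\<ge>M. \<forall>n\<ge>M. dist (t m) (t n) < e"
        proof (intro exI allI impI)
          fix m n assume mn: "m \<ge> M" "n \<ge> M"
          have "\<bar>t m - t n\<bar> * d \<le> norm ((x m - t m *\<^sub>R b - (x n - t n *\<^sub>R b)) + (t m - t n) *\<^sub>R b)"
            by (rule key) (use t in \<open>auto intro: span_diff\<close>)
          also have "\<dots> = dist (x m) (x n)" by (simp add: dist_norm algebra_simps)
          also have "\<dots> < e * d" using M mn by auto
          finally show "dist (t m) (t n) < e" using d by (simp add: dist_real_def)
        qed
      qed
      then obtain \<tau> where \<tau>: "t \<longlonglongrightarrow> \<tau>" using Cauchy_convergent_iff convergent_def by blast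
      have "(\<lambda>n. x n - t n *\<^sub>R b) \<longlonglongrightarrow> l - \<tau> *\<^sub>R b" by (intro tendsto_intros lim \<tau>)
      moreover have cl: "\<forall>x l. (\<forall>n. x n \<in> span S) \<and> x \<longlonglongrightarrow> l \<longrightarrow> l \<in> span S" 
        using insert.IH by (simp add: closed_sequential_limits)
      ultimately have "l - \<tau> *\<^sub>R b \<in> span S"
        using cl[rule_format, of "\<lambda>n. x n - t n *\<^sub>R b" "l - \<tau> *\<^sub>R b"] t by simp
      then show "l \<in> span (insert b S)" by (auto simp: span_insert)
    qed
  qed
qed

lemma compact_net:
  assumes "compact K" "f ` S \<subseteq> K" "e > 0"
  shows "\<exists>B. finite B \<and> B \<subseteq> S \<and> (\<forall>y\<in>S. \<exists>b\<in>B. dist (f y) (f b) < e)"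
proof -
  obtain k where k: "finite k" "K \<subseteq> (\<Union>x\<in>k. ball x (e/2))"
    using assms(1,3) unfolding compact_eq_totally_bounded by (meson half_gt_zero)
  define k' where "k' = {x\<in>k. \<exists>y\<in>S. dist x (f y) < e/2}"
  define B where "B = (\<lambda>x. SOME y. y \<in> S \<and> dist x (f y) < e/2) ` k'"
  have Bp: "\<And>x. x \<in> k' \<Longrightarrow> (SOME y. y \<in> S \<and> dist x (f y) < e/2) \<in> S \<and> dist x (f (SOME y. y \<in> S \<and> dist x (f y) < e/2)) < e/2"
    unfolding k'_def by (rule someI_ex) auto
  have "finite B" using k by (simp add: B_def k'_def)
  moreover have "B \<subseteq> S" using Bp B_def by auto
  moreover have "\<exists>b\<in>B. dist (f y) (f b) < e" if y: "y \<in> S" for y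
  proof -
    from y assms(2) k obtain x where x: "x \<in> k" "dist x (f y) < e/2" by fastforce
    then have "x \<in> k'" using y k'_def by auto
    let ?b = "SOME y. y \<in> S \<and> dist x (f y) < e/2"
    have "?b \<in> B" using \<open>x \<in> k'\<close> B_def by auto
    moreover have "dist (f y) (f ?b) < e" using Bp[OF \<open>x \<in> k'\<close>] x dist_triangle3[of "f y" "f ?b" x] by linarith
    ultimately show ?thesis by blast
  qed
  ultimately show ?thesis by blast
qed

lemma compact_imp_ss:
  fixes T :: "'a::real_normed_vector \<Rightarrow> 'b::real_normed_vector"
  assumes T: "bounded_linear T" and C: "compact_on E T"
  shows "strictly_singular_on E T"
  unfolding strictly_singular_on_def
proof (intro allI impI notI, elim conjE)
  fix Y assume Y: "subspace Y" "Y \<subseteq> E" "infinite_dimensional Y" and bb: "bounded_below_on Y T"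
  from bb obtain c where c: "c > 0" "\<And>y. y \<in> Y \<Longrightarrow> c * norm y \<le> norm (T y)" 
    by (auto simp: bounded_below_on_def)
  interpret T: bounded_linear T by fact
  let ?K = "closure (T ` (E \<inter> cball 0 1))"
  have K: "compact ?K" using C by (simp add: compact_on_def)
  have "T ` (Y \<inter> cball 0 1) \<subseteq> T ` (E \<inter> cball 0 1)" using Y(2) by auto
  also have "\<dots> \<subseteq> ?K" by (rule closure_subset)
  finally have sub: "T ` (Y \<inter> cball 0 1) \<subseteq> ?K" .
  have c2: "c/2 > 0" using c by simp
  from compact_net[OF K sub c2] obtain B where B: "finite B" "B \<subseteq> Y \<inter> cball 0 1" 
    "\<forall>y\<in>Y \<inter> cball 0 1. \<exists>b\<in>B. dist (T y) (T b) < c/2"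
    by blast
  have "B \<subseteq> Y" using B(2) by blast
  then have spB: "span B \<subseteq> Y" by (rule span_minimal[OF _ Y(1)])
  have near: "\<exists>b\<in>B. norm (y - b) < 1/2" if yy: "y \<in> Y \<inter> cball 0 1" for y
  proof -
    obtain b where b: "b \<in> B" "dist (T y) (T b) < c/2" using bspec[OF B(3) yy] by blast
    have "y - b \<in> Y" using that b B(2) Y(1) by (auto intro: subspace_diff)
    then have "c * norm (y - b) \<le> norm (T (y - b))" by (rule c(2))
    also have "\<dots> = dist (T y) (T b)" by (simp add: dist_norm T.diff)
    finally have "c * norm (y - b) < c * (1/2)" using b by simp
    then show ?thesis using b c(1) by (auto simp: mult_less_cancel_left_pos)
  qed
  have approx: "\<exists>v\<in>span B. norm (y - v) \<le> (1/2)^n" if y: "y \<in> Y \<inter> cball 0 1" for y n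
  proof (induction n)
    case 0 then show ?case using y by (intro bexI[of _ 0]) (auto simp: span_zero)
  next
    case (Suc n)
    then obtain v where v: "v \<in> span B" "norm (y - v) \<le> (1/2)^n" by blast
    define z where "z = (2^n) *\<^sub>R (y - v)"
    have "z \<in> Y" unfolding z_def using y v spB Y(1) by (auto intro: subspace_diff subspace_scale)
    moreover have "norm z \<le> 1"
    proof -
      have "norm z = 2^n * norm (y - v)" unfolding z_def norm_scaleR by simp
      also have "\<dots> \<le> (2::real)^n * (1/2)^n" using v(2) by (intro mult_left_mono) auto
      also have "\<dots> = 1" by (simp add: power_one_over)
      finally show ?thesis .
    qed
    ultimately obtain b where b: "b \<in> B" "norm (z - b) < 1/2" using near by auto
    have eq: "y - (v + (1/2)^n *\<^sub>R b) = (1/2)^n *\<^sub>R (z - b)"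
      unfolding z_def by (simp add: algebra_simps power_one_over)
    have "v + (1/2)^n *\<^sub>R b \<in> span B" using v b by (auto intro: span_add span_scale span_base)
    moreover have "norm (y - (v + (1/2)^n *\<^sub>R b)) \<le> (1/2)^Suc n"
    proof -
      have "norm ((1/2::real)^n *\<^sub>R (z - b)) = (1/2)^n * norm (z - b)" unfolding norm_scaleR by simp
      also have "\<dots> \<le> (1/2)^n * (1/2)" using b(2) by (intro mult_left_mono) auto
      also have "\<dots> = (1/2)^Suc n" by simp
      finally show ?thesis unfolding eq .
    qed
    ultimately show ?case by blast
  qed
  have inB: "y \<in> span B" if y: "y \<in> Y \<inter> cball 0 1" for y
  proof -
    have "y \<in> closure (span B)" unfolding closure_approachable
    proof (intro allI impI)
      fix e :: real assume "e > 0"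
      then obtain n where n: "(1/2::real)^n < e" using real_arch_pow_inv[of e "1/2"] by auto
      obtain v where "v \<in> span B" "norm (y - v) \<le> (1/2)^n" using approx[OF y] by blast
      then show "\<exists>v\<in>span B. dist v y < e" using n by (intro bexI[of _ v]) (auto simp: dist_norm norm_minus_commute)
    qed
    then show ?thesis using closed_span_finite[OF B(1)] by (simp add: closure_closed)
  qed
  have "Y \<subseteq> span B"
  proof
    fix y assume y: "y \<in> Y"
    show "y \<in> span B"
    proof (cases "y = 0")
      case True then show ?thesis by (simp add: span_zero)
    next
      case False
      have "(1/norm y) *\<^sub>R y \<in> Y \<inter> cball 0 1" using y Y(1) False by (auto intro: subspace_scale)
      then have "(1/norm y) *\<^sub>R y \<in> span B" by (rule inB)
      then have "norm y *\<^sub>R ((1/norm y) *\<^sub>R y) \<in> span B" by (rule span_scale)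
      then show ?thesis using False by simp
    qed
  qed
  then show False using Y(3) B(1) by (auto simp: infinite_dimensional_def)
qed

lemma perturb:
  fixes e f :: "nat \<Rightarrow> 'a::banach_lattice"
  assumes dis: "disjoint_seq f" and F: "finite F"
    and fn: "\<And>k. k \<in> F \<Longrightarrow> norm (f k) \<ge> 1/2"
    and sm: "(\<Sum>k\<in>F. norm (e k - f k)) \<le> 1/8"
  shows "\<forall>k\<in>F. \<bar>a k\<bar> \<le> 3 * norm (\<Sum>k\<in>F. a k *\<^sub>R e k)"
    and "norm ((\<Sum>k\<in>F. a k *\<^sub>R e k) - (\<Sum>k\<in>F. a k *\<^sub>R f k))
           \<le> 3 * norm (\<Sum>k\<in>F. a k *\<^sub>R e k) * (\<Sum>k\<in>F. norm (e k - f k))"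
proof -
  let ?x = "\<Sum>k\<in>F. a k *\<^sub>R e k"
  let ?y = "\<Sum>k\<in>F. a k *\<^sub>R f k"
  let ?D = "\<Sum>k\<in>F. norm (e k - f k)"
  have D0: "0 \<le> ?D" by (simp add: sum_nonneg)
  have main: "(\<forall>k\<in>F. \<bar>a k\<bar> \<le> 3 * norm ?x) \<and> norm (?x - ?y) \<le> 3 * norm ?x * ?D"
  proof (cases "F = {}")
    case True then show ?thesis by simp
  next
    case False
    define M where "M = Max ((\<lambda>k. \<bar>a k\<bar>) ` F)"
    have Mge: "\<And>k. k \<in> F \<Longrightarrow> \<bar>a k\<bar> \<le> M" unfolding M_def using F by (intro Max_ge) auto
    have "M \<in> (\<lambda>k. \<bar>a k\<bar>) ` F" unfolding M_def using F False by (intro Max_in) auto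
    then obtain k0 where k0: "k0 \<in> F" "M = \<bar>a k0\<bar>" by auto
    have diff: "?x - ?y = (\<Sum>k\<in>F. a k *\<^sub>R (e k - f k))"
      by (simp add: sum_subtractf scaleR_diff_right)
    have "norm (?x - ?y) \<le> (\<Sum>k\<in>F. norm (a k *\<^sub>R (e k - f k)))"
      unfolding diff by (rule norm_sum)
    also have "\<dots> = (\<Sum>k\<in>F. \<bar>a k\<bar> * norm (e k - f k))" by simp
    also have "\<dots> \<le> (\<Sum>k\<in>F. M * norm (e k - f k))"
      by (intro sum_mono mult_right_mono Mge) auto
    also have "\<dots> = M * ?D" by (simp add: sum_distrib_left)
    finally have nd: "norm (?x - ?y) \<le> M * ?D" .
    have M0: "0 \<le> M" using k0 by simp
    have "M * (1/2) \<le> \<bar>a k0\<bar> * norm (f k0)" unfolding k0(2) using fn[OF k0(1)] by (intro mult_left_mono) auto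
    also have "\<dots> = norm (a k0 *\<^sub>R f k0)" by simp
    also have "\<dots> \<le> norm ?y" by (rule coeff_bound[OF dis F k0(1)])
    also have "\<dots> \<le> norm ?x + norm (?x - ?y)" by (metis norm_triangle_sub norm_minus_commute)
    also have "\<dots> \<le> norm ?x + M * (1/8)" using nd sm M0 by (meson add_left_mono mult_left_mono order_trans)
    finally have "M * (1/2) \<le> norm ?x + M * (1/8)" .
    then have "M \<le> 3 * norm ?x" using norm_ge_zero[of ?x] by linarith
    then have "\<forall>k\<in>F. \<bar>a k\<bar> \<le> 3 * norm ?x" using Mge by (meson order_trans)
    moreover have "norm (?x - ?y) \<le> 3 * norm ?x * ?D"
      using nd \<open>M \<le> 3 * norm ?x\<close> D0 by (meson mult_right_mono order_trans)
    ultimately show ?thesis by blast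
  qed
  then show "\<forall>k\<in>F. \<bar>a k\<bar> \<le> 3 * norm ?x" and "norm (?x - ?y) \<le> 3 * norm ?x * ?D" by auto
qed

lemma ss_gives_seq:
  fixes T :: "'a::banach_lattice \<Rightarrow> 'b::real_normed_vector"
  assumes T: "bounded_linear T" and E: "subspace E" and eE: "\<And>n. e n \<in> E"
    and ad: "almost_disjoint e" and ss: "strictly_singular_on E T"
  shows "\<exists>u. almost_disjoint u \<and> (\<lambda>n. norm (T (u n))) \<longlonglongrightarrow> 0"
proof -
  interpret T: bounded_linear T by fact
  from ad obtain f where en: "\<And>n. norm (e n) = 1" and df: "disjoint_seq f"
    and lim: "(\<lambda>n. norm (e n - f n)) \<longlonglongrightarrow> 0"
    by (auto simp: almost_disjoint_def)
  have ev: "\<And>k. eventually (\<lambda>n. norm (e n - f n) < (1/2)^k / 16) sequentially"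
    using lim by (intro order_tendstoD(2)) auto
  obtain r where r: "strict_mono r" "\<And>k. norm (e (r k) - f (r k)) < (1/2)^k/16"
    using subseq_choose[of "\<lambda>k n. norm (e n - f n) < (1/2)^k / 16", OF ev] by blast
  define e' where "e' = e \<circ> r"
  define f' where "f' = f \<circ> r"
  have injr: "inj r" using r(1) by (rule strict_mono_imp_inj_on)
  have df': "disjoint_seq f'"
    using df injr unfolding disjoint_seq_def f'_def by (auto simp: inj_eq)
  have dl: "norm (e' k - f' k) \<le> (1/2)^k/16" for k
    using r(2)[of k] by (simp add: e'_def f'_def)
  have en': "norm (e' k) = 1" for k by (simp add: e'_def en)
  have eE': "e' k \<in> E" for k by (simp add: e'_def eE)
  have fn: "norm (f' k) \<ge> 1/2" for k
  proof -
    have "(1/2::real)^k \<le> 1" by (simp add: power_le_one)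
    then have "norm (e' k - f' k) \<le> 1/16" using dl[of k] by linarith
    moreover have "norm (e' k) \<le> norm (f' k) + norm (e' k - f' k)" by (metis norm_triangle_sub add.commute)
    ultimately show ?thesis using en'[of k] by linarith
  qed
  have sumd: "(\<Sum>k\<in>F. norm (e' k - f' k)) \<le> (1/2)^N / 8" if "finite F" "F \<subseteq> {N..}" for F N
  proof -
    have "(\<Sum>k\<in>F. norm (e' k - f' k)) \<le> (\<Sum>k\<in>F. (1/2::real)^k / 16)" by (intro sum_mono dl)
    also have "\<dots> = (\<Sum>k\<in>F. (1/2::real)^k) / 16" by (simp add: sum_divide_distrib)
    also have "\<dots> \<le> 2 * (1/2)^N / 16" using geo_bound[OF that] by (intro divide_right_mono) auto
    finally show ?thesis by simp
  qed
  have sumd8: "(\<Sum>k\<in>F. norm (e' k - f' k)) \<le> 1/8" if "finite F" "F \<subseteq> {N..}" for F N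
  proof -
    have "(1/2::real)^N \<le> 1" by (simp add: power_le_one)
    then show ?thesis using sumd[OF that] by simp
  qed
  have indep0: "a k = 0" if "finite F" "F \<subseteq> {N..}" "(\<Sum>k\<in>F. a k *\<^sub>R e' k) = 0" "k \<in> F" for F N a k
  proof -
    have "\<forall>k\<in>F. \<bar>a k\<bar> \<le> 3 * norm (\<Sum>k\<in>F. a k *\<^sub>R e' k)"
      by (rule perturb(1)[OF df' that(1) fn sumd8[OF that(1,2)]])
    then show ?thesis using that by auto
  qed
  have step: "\<exists>F a. finite F \<and> F \<subseteq> {N..} \<and> norm (\<Sum>k\<in>F. a k *\<^sub>R e' k) = 1 
      \<and> norm (T (\<Sum>k\<in>F. a k *\<^sub>R e' k)) < 1 / real (Suc N)
      \<and> norm ((\<Sum>k\<in>F. a k *\<^sub>R e' k) - (\<Sum>k\<in>F. a k *\<^sub>R f' k)) \<le> (1/2)^N" for N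
  proof -
    let ?Y = "span (e' ` {N..})"
    have Ysub: "?Y \<subseteq> E" using eE' E by (intro span_minimal) auto
    have inj: "inj_on e' {N..}"
    proof (rule inj_onI)
      fix j k assume jk: "j \<in> {N..}" "k \<in> {N..}" "e' j = e' k"
      show "j = k"
      proof (rule ccontr)
        assume ne: "j \<noteq> k"
        let ?a = "\<lambda>i. if i = j then (1::real) else -1"
        have "(\<Sum>i\<in>{j,k}. ?a i *\<^sub>R e' i) = 0" using ne jk(3) by simp
        then have "?a j = 0" using jk by (intro indep0[of "{j,k}" N]) auto
        then show False by simp
      qed
    qed
    have Yinf: "infinite_dimensional ?Y"
      unfolding infinite_dimensional_def
    proof (rule notI, elim exE conjE)
      fix B assume B: "finite B" "?Y \<subseteq> span B"
      let ?I = "{N..N + card B}"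
      have injI: "inj_on e' ?I" using inj by (rule inj_on_subset) auto
      have indep: "independent (e' ` ?I)"
      proof (rule independent_if_scalars_zero)
        show "finite (e' ` ?I)" by simp
        fix c v assume sum0: "(\<Sum>v\<in>e' ` ?I. c v *\<^sub>R v) = 0" and v: "v \<in> e' ` ?I"
        have "(\<Sum>k\<in>?I. c (e' k) *\<^sub>R e' k) = 0" using sum0 by (simp add: sum.reindex[OF injI])
        moreover obtain k where k: "k \<in> ?I" "v = e' k" using v by auto
        ultimately have "c (e' k) = 0" by (intro indep0[of ?I N "\<lambda>k. c (e' k)" k]) auto
        then show "c v = 0" using k by simp
      qed
      have "e' ` ?I \<subseteq> ?Y" by (auto intro: span_base)
      then have "e' ` ?I \<subseteq> span B" using B(2) by blast
      then have "card (e' ` ?I) \<le> card B" using independent_span_bound[OF B(1) indep] by blast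
      moreover have "card (e' ` ?I) = card B + 1" using card_image[OF injI] by simp
      ultimately show False by simp
    qed
    have "subspace ?Y" by (rule subspace_span)
    then have "\<not> bounded_below_on ?Y T" using ss Ysub Yinf unfolding strictly_singular_on_def by blast
    moreover have c0: "1 / real (Suc N) > 0" by simp
    ultimately obtain y where y: "y \<in> ?Y" "\<not> (1 / real (Suc N)) * norm y \<le> norm (T y)"
      unfolding bounded_below_on_def by blast
    have yn: "y \<noteq> 0" using y(2) by auto
    define x where "x = (1 / norm y) *\<^sub>R y"
    have xY: "x \<in> ?Y" unfolding x_def using y(1) by (rule span_scale)
    have nx: "norm x = 1" unfolding x_def using yn by simp
    have "norm (T x) = norm (T y) / norm y" unfolding x_def T.scaleR by simp
    also have "\<dots> < 1 / real (Suc N)" using y(2) yn by (simp add: divide_less_eq mult.commute)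
    finally have Tx: "norm (T x) < 1 / real (Suc N)" .
    obtain F a where F: "finite F" "F \<subseteq> {N..}" "x = (\<Sum>k\<in>F. a k *\<^sub>R e' k)"
      using span_image_sum[OF xY] by blast
    have "norm (x - (\<Sum>k\<in>F. a k *\<^sub>R f' k)) \<le> 3 * norm x * (\<Sum>k\<in>F. norm (e' k - f' k))"
      unfolding F(3) by (rule perturb(2)[OF df' F(1) fn sumd8[OF F(1,2)]])
    also have "\<dots> \<le> 3 * 1 * ((1/2)^N / 8)" unfolding nx using sumd[OF F(1,2)] by simp
    also have "\<dots> \<le> (1/2)^N" by simp
    finally have "norm (x - (\<Sum>k\<in>F. a k *\<^sub>R f' k)) \<le> (1/2)^N" .
    then show ?thesis using F nx Tx by blast
  qed
  define Q where "Q N F a \<longleftrightarrow> finite F \<and> F \<subseteq> {N..} 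
      \<and> norm (\<Sum>k\<in>F. a k *\<^sub>R e' k) = 1 
      \<and> norm (T (\<Sum>k\<in>F. a k *\<^sub>R e' k)) < 1 / real (Suc N)
      \<and> norm ((\<Sum>k\<in>F. a k *\<^sub>R e' k) - (\<Sum>k\<in>F. a k *\<^sub>R f' k)) \<le> (1/2)^N" for N F a
  have "\<forall>N. \<exists>F. \<exists>a. Q N F a" unfolding Q_def using step by blast
  from choice[OF this] obtain FF where "\<forall>N. \<exists>a. Q N (FF N) a" by blast
  from choice[OF this] obtain aa where "\<forall>N. Q N (FF N) (aa N)" by blast
  then have FA: "\<And>N. finite (FF N) \<and> FF N \<subseteq> {N..} 
      \<and> norm (\<Sum>k\<in>FF N. aa N k *\<^sub>R e' k) = 1 
      \<and> norm (T (\<Sum>k\<in>FF N. aa N k *\<^sub>R e' k)) < 1 / real (Suc N)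
      \<and> norm ((\<Sum>k\<in>FF N. aa N k *\<^sub>R e' k) - (\<Sum>k\<in>FF N. aa N k *\<^sub>R f' k)) \<le> (1/2)^N"
    unfolding Q_def by blast
  define Ns where "Ns = rec_nat 0 (\<lambda>j n. Suc (Max (insert n (FF n))))"
  have Ns0: "Ns 0 = 0" by (simp add: Ns_def)
  have NsS: "Ns (Suc j) = Suc (Max (insert (Ns j) (FF (Ns j))))" for j by (simp add: Ns_def)
  have fin: "finite (FF n)" for n using FA by blast
  have Nsl: "Ns j < Ns (Suc j)" for j unfolding NsS using fin by (simp add: le_imp_less_Suc)
  have smN: "strict_mono Ns" by (simp add: strict_mono_Suc_iff Nsl)
  have Nsge: "j \<le> Ns j" for j by (rule strict_mono_imp_increasing[OF smN])
  have blk: "FF (Ns j) \<subseteq> {Ns j..<Ns (Suc j)}" for j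
  proof
    fix k assume k: "k \<in> FF (Ns j)"
    have "Ns j \<le> k" using FA k by blast
    moreover have "k \<le> Max (insert (Ns j) (FF (Ns j)))" using fin k by simp
    ultimately show "k \<in> {Ns j..<Ns (Suc j)}" unfolding NsS by simp
  qed
  have disjb: "FF (Ns i) \<inter> FF (Ns j) = {}" if "i < j" for i j
  proof -
    have "Ns (Suc i) \<le> Ns j" using that strict_mono_less_eq[OF smN] by simp
    show ?thesis
    proof (rule ccontr)
      assume "FF (Ns i) \<inter> FF (Ns j) \<noteq> {}"
      then obtain x where x: "x \<in> FF (Ns i)" "x \<in> FF (Ns j)" by blast
      have "x < Ns (Suc i)" using blk[of i] x(1) by auto
      moreover have "Ns j \<le> x" using blk[of j] x(2) by auto
      ultimately show False using \<open>Ns (Suc i) \<le> Ns j\<close> by linarith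
    qed
  qed
  define u where "u j = (\<Sum>k\<in>FF (Ns j). aa (Ns j) k *\<^sub>R e' k)" for j
  define v where "v j = (\<Sum>k\<in>FF (Ns j). aa (Ns j) k *\<^sub>R f' k)" for j
  have dv: "disjoint_seq v" unfolding disjoint_seq_def
  proof (intro allI impI)
    fix i j :: nat assume "i \<noteq> j"
    then have "FF (Ns i) \<inter> FF (Ns j) = {}" using disjb[of i j] disjb[of j i] by (cases "i < j") auto
    then show "inf (lmod (v i)) (lmod (v j)) = 0" unfolding v_def
      by (intro disjoint_sums[OF df' fin fin])
  qed
  have us: "u j \<in> sphere 0 1" for j using FA[of "Ns j"] by (simp add: u_def)
  have uv: "(\<lambda>j. norm (u j - v j)) \<longlonglongrightarrow> 0"
  proof (rule Lim_null_comparison)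
    show "((\<lambda>j. (1/2::real)^j) \<longlonglongrightarrow> 0)" by (rule LIMSEQ_power_zero) simp
    show "\<forall>\<^sub>F j in sequentially. norm (norm (u j - v j)) \<le> (1/2)^j"
    proof (rule always_eventually, rule allI)
      fix j
      have "norm (u j - v j) \<le> (1/2)^(Ns j)" using FA[of "Ns j"] by (simp add: u_def v_def)
      also have "\<dots> \<le> (1/2)^j" using Nsge[of j] by (intro power_decreasing) auto
      finally show "norm (norm (u j - v j)) \<le> (1/2)^j" by simp
    qed
  qed
  have Tu: "(\<lambda>j. norm (T (u j))) \<longlonglongrightarrow> 0"
  proof (rule Lim_null_comparison)
    show "(\<lambda>j. inverse (real (Suc j))) \<longlonglongrightarrow> 0" by (rule LIMSEQ_inverse_real_of_nat)
    show "\<forall>\<^sub>F j in sequentially. norm (norm (T (u j))) \<le> inverse (real (Suc j))"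
    proof (rule always_eventually, rule allI)
      fix j
      have "norm (T (u j)) < 1 / real (Suc (Ns j))" using FA[of "Ns j"] by (simp add: u_def)
      also have "\<dots> \<le> 1 / real (Suc j)" using Nsge[of j] by (intro divide_left_mono) auto
      finally show "norm (norm (T (u j))) \<le> inverse (real (Suc j))" by (simp add: inverse_eq_divide)
    qed
  qed
  have "almost_disjoint u" unfolding almost_disjoint_def using us dv uv by blast
  then show ?thesis using Tu by blast
qed

lemma Hcomp:
  fixes v :: "nat \<Rightarrow> 'b::real_normed_vector"
  shows "compact {(\<Sum>j<N. b j *\<^sub>R v j) | b. \<forall>j. \<bar>b j\<bar> \<le> 2}"
proof (induction N)
  case 0
  have "{(\<Sum>j<0. b j *\<^sub>R v j) | b::nat\<Rightarrow>real. \<forall>j. \<bar>b j\<bar> \<le> 2} = {0}"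
    by (auto intro!: exI[of _ "\<lambda>_. 0"])
  then show ?case by simp
next
  case (Suc N)
  let ?H = "{(\<Sum>j<N. b j *\<^sub>R v j) | b. \<forall>j. \<bar>b j\<bar> \<le> 2}"
  let ?L = "(\<lambda>t. t *\<^sub>R v N) ` {-2..2::real}"
  have cL: "compact ?L" by (intro compact_continuous_image continuous_intros) auto
  have eq: "{(\<Sum>j<Suc N. b j *\<^sub>R v j) | b. \<forall>j. \<bar>b j\<bar> \<le> 2} = {x + y | x y. x \<in> ?H \<and> y \<in> ?L}"
  proof (intro set_eqI iffI)
    fix z assume "z \<in> {(\<Sum>j<Suc N. b j *\<^sub>R v j) | b. \<forall>j. \<bar>b j\<bar> \<le> 2}"
    then obtain b where b: "\<forall>j. \<bar>b j\<bar> \<le> 2" "z = (\<Sum>j<Suc N. b j *\<^sub>R v j)" by blast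
    then have "z = (\<Sum>j<N. b j *\<^sub>R v j) + b N *\<^sub>R v N" by simp
    moreover have "(\<Sum>j<N. b j *\<^sub>R v j) \<in> ?H" using b by blast
    moreover have "\<bar>b N\<bar> \<le> 2" using b(1) by blast
    then have "b N \<in> {-2..2}" by (auto simp: abs_le_iff)
    then have "b N *\<^sub>R v N \<in> ?L" by blast
    ultimately show "z \<in> {x + y | x y. x \<in> ?H \<and> y \<in> ?L}" by blast
  next
    fix z assume "z \<in> {x + y | x y. x \<in> ?H \<and> y \<in> ?L}"
    then obtain b t where b: "\<forall>j. \<bar>b j\<bar> \<le> 2" "t \<in> {-2..2}" "z = (\<Sum>j<N. b j *\<^sub>R v j) + t *\<^sub>R v N"
      by blast
    define b' where "b' = b(N := t)"
    have "\<forall>j. \<bar>b' j\<bar> \<le> 2" using b by (auto simp: b'_def)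
    moreover have "(\<Sum>j<N. b' j *\<^sub>R v j) = (\<Sum>j<N. b j *\<^sub>R v j)" by (intro sum.cong) (auto simp: b'_def)
    then have "z = (\<Sum>j<Suc N. b' j *\<^sub>R v j)" using b by (simp add: b'_def)
    ultimately show "z \<in> {(\<Sum>j<Suc N. b j *\<^sub>R v j) | b. \<forall>j. \<bar>b j\<bar> \<le> 2}" by blast
  qed
  show ?case unfolding eq by (rule compact_sums[OF Suc.IH cL])
qed

lemma A_gives_compact:
  fixes T :: "'a::banach_lattice \<Rightarrow> 'b::banach"
  assumes T: "bounded_linear T" and ad: "almost_disjoint e" and Te: "(\<lambda>n. norm (T (e n))) \<longlonglongrightarrow> 0"
  shows "\<exists>g. disjoint_seq g \<and> (\<forall>n. g n \<noteq> 0) \<and> compact_on (closure (span (range g))) T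
     \<and> closed_subspace (closure (span (range g))) \<and> \<not> dispersed (closure (span (range g)))"
proof -
  interpret T: bounded_linear T by fact
  obtain K where K: "K > 0" "\<And>x. norm (T x) \<le> norm x * K" using T.pos_bounded by blast
  from ad obtain f where en: "\<And>n. norm (e n) = 1" and df: "disjoint_seq f"
    and lim: "(\<lambda>n. norm (e n - f n)) \<longlonglongrightarrow> 0"
    by (auto simp: almost_disjoint_def)
  have ev: "eventually (\<lambda>n. norm (e n - f n) < 1/2 \<and> norm (T (f n)) \<le> (1/2)^k) sequentially" for k
  proof -
    have e1: "eventually (\<lambda>n. norm (e n - f n) < 1/2) sequentially"
      using lim by (intro order_tendstoD(2)) auto
    have e2: "eventually (\<lambda>n. norm (e n - f n) < (1/2)^k / (2*K)) sequentially"
      using lim K by (intro order_tendstoD(2)) auto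
    have e3: "eventually (\<lambda>n. norm (T (e n)) < (1/2)^k / 2) sequentially"
      using Te by (intro order_tendstoD(2)) auto
    show ?thesis using e1 e2 e3
    proof eventually_elim
      case (elim n)
      have "T (f n) = T (e n) - T (e n - f n)" by (simp add: T.diff)
      then have 1: "norm (T (f n)) \<le> norm (T (e n)) + norm (T (e n - f n))" by (metis norm_triangle_ineq4)
      have 2: "norm (T (e n - f n)) \<le> norm (e n - f n) * K" by (rule K(2))
      have "norm (e n - f n) * K < (1/2)^k / (2*K) * K" using elim(2) K(1) by (rule mult_strict_right_mono)
      also have "\<dots> = (1/2)^k / 2" using K(1) by simp
      finally have 3: "norm (e n - f n) * K < (1/2)^k / 2" .
      show ?case using 1 2 3 elim by linarith
    qed
  qed
  obtain r where r: "strict_mono r" "\<And>k. norm (e (r k) - f (r k)) < 1/2 \<and> norm (T (f (r k))) \<le> (1/2)^k"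
    using subseq_choose[of "\<lambda>k n. norm (e n - f n) < 1/2 \<and> norm (T (f n)) \<le> (1/2)^k", OF ev] by blast
  define g where "g = f \<circ> r"
  have injr: "inj r" using r(1) by (rule strict_mono_imp_inj_on)
  have dg: "disjoint_seq g"
    using df injr unfolding disjoint_seq_def g_def by (auto simp: inj_eq)
  have gn: "norm (g k) \<ge> 1/2" for k
  proof -
    have "norm (e (r k)) \<le> norm (g k) + norm (e (r k) - g k)" by (metis norm_triangle_sub add.commute)
    then show ?thesis using r(2)[of k] en[of "r k"] by (simp add: g_def)
  qed
  have Tg: "norm (T (g k)) \<le> (1/2)^k" for k using r(2)[of k] by (simp add: g_def)
  have g0: "g k \<noteq> 0" for k using gn[of k] by auto
  define G where "G = closure (span (range g))"
  have Gsub: "subspace G" unfolding G_def by (intro subspace_closure' subspace_span)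
  have cs: "closed_subspace G" unfolding closed_subspace_def using Gsub by (simp add: G_def)
  define w where "w k = (1 / norm (g k)) *\<^sub>R g k" for k
  have wG: "w k \<in> G" for k unfolding w_def G_def
    by (rule subsetD[OF closure_subset]) (intro span_scale span_base rangeI)
  have nw: "norm (w k) = 1" for k unfolding w_def using g0[of k] by simp
  have dw: "disjoint_seq w" unfolding disjoint_seq_def w_def
  proof (intro allI impI)
    fix n m :: nat assume "n \<noteq> m"
    then have "inf (lmod (g n)) (lmod (g m)) = 0" using dg by (simp add: disjoint_seq_def)
    then show "inf (lmod ((1 / norm (g n)) *\<^sub>R g n)) (lmod ((1 / norm (g m)) *\<^sub>R g m)) = 0"
      by (rule inf_lmod_scale_zero)
  qed
  have "almost_disjoint w" unfolding almost_disjoint_def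
    using nw dw by (intro conjI allI exI[of _ w]) auto
  then have nd: "\<not> dispersed G" unfolding dispersed_def using wG by blast
  define S0 where "S0 = span (range g) \<inter> cball 0 1"
  define H where "H N = {(\<Sum>j<N. b j *\<^sub>R T (g j)) | b. \<forall>j. \<bar>b j\<bar> \<le> 2}" for N
  have Hc: "compact (H N)" for N unfolding H_def using Hcomp[of "\<lambda>j. T (g j)" N] by simp
  have approx: "\<exists>h\<in>H N. norm (T x - h) \<le> 4 * (1/2)^N" if x: "x \<in> S0" for x N
  proof -
    have "x \<in> span (g ` UNIV)" using x by (simp add: S0_def)
    then obtain F a where F: "finite F" "x = (\<Sum>k\<in>F. a k *\<^sub>R g k)"
      using span_image_sum by blast
    have nx: "norm (\<Sum>k\<in>F. a k *\<^sub>R g k) \<le> 1" using x F(2) by (simp add: S0_def)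
    have ab: "\<bar>a j\<bar> \<le> 2" if j: "j \<in> F" for j
    proof -
      have "\<bar>a j\<bar> * (1/2) \<le> \<bar>a j\<bar> * norm (g j)" using gn by (intro mult_left_mono) auto
      also have "\<dots> = norm (a j *\<^sub>R g j)" by simp
      also have "\<dots> \<le> 1" using coeff_bound[OF dg F(1) j, of a] nx by linarith
      finally show ?thesis by simp
    qed
    define b where "b j = (if j \<in> F then a j else 0)" for j
    have bb: "\<forall>j. \<bar>b j\<bar> \<le> 2" using ab by (simp add: b_def)
    have Tx: "T x = (\<Sum>j\<in>F. a j *\<^sub>R T (g j))" by (simp add: F(2) T.sum T.scaleR)
    have split: "(\<Sum>j\<in>F. a j *\<^sub>R T (g j)) = (\<Sum>j\<in>F \<inter> {..<N}. a j *\<^sub>R T (g j)) + (\<Sum>j\<in>F - {..<N}. a j *\<^sub>R T (g j))"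
      by (rule sum.Int_Diff[OF F(1)])
    have head: "(\<Sum>j<N. b j *\<^sub>R T (g j)) = (\<Sum>j\<in>F \<inter> {..<N}. a j *\<^sub>R T (g j))"
    proof -
      have "(\<Sum>j<N. b j *\<^sub>R T (g j)) = (\<Sum>j\<in>{..<N}. if j \<in> F then a j *\<^sub>R T (g j) else 0)"
        by (intro sum.cong) (auto simp: b_def)
      also have "\<dots> = (\<Sum>j\<in>{..<N} \<inter> F. a j *\<^sub>R T (g j))" by (simp add: sum.inter_restrict)
      finally show ?thesis by (simp add: Int_commute)
    qed
    have tail: "norm (\<Sum>j\<in>F - {..<N}. a j *\<^sub>R T (g j)) \<le> 4 * (1/2)^N"
    proof -
      have "norm (\<Sum>j\<in>F - {..<N}. a j *\<^sub>R T (g j)) \<le> (\<Sum>j\<in>F - {..<N}. norm (a j *\<^sub>R T (g j)))"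
        by (rule norm_sum)
      also have "\<dots> = (\<Sum>j\<in>F - {..<N}. \<bar>a j\<bar> * norm (T (g j)))" by simp
      also have "\<dots> \<le> (\<Sum>j\<in>F - {..<N}. 2 * (1/2)^j)"
        using ab Tg by (intro sum_mono mult_mono) auto
      also have "\<dots> = 2 * (\<Sum>j\<in>F - {..<N}. (1/2::real)^j)" by (simp add: sum_distrib_left)
      also have "\<dots> \<le> 2 * (2 * (1/2)^N)"
      proof -
        have "F - {..<N} \<subseteq> {N..}" by auto
        then have "(\<Sum>j\<in>F - {..<N}. (1/2::real)^j) \<le> 2 * (1/2)^N"
          using F(1) by (intro geo_bound) auto
        then show ?thesis by simp
      qed
      finally show ?thesis by simp
    qed
    have "(\<Sum>j<N. b j *\<^sub>R T (g j)) \<in> H N" unfolding H_def using bb by blast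
    moreover have "T x - (\<Sum>j<N. b j *\<^sub>R T (g j)) = (\<Sum>j\<in>F - {..<N}. a j *\<^sub>R T (g j))"
      unfolding Tx split head by simp
    ultimately show ?thesis using tail by metis
  qed
  have tb: "\<exists>k. finite k \<and> closure (T ` S0) \<subseteq> (\<Union>x\<in>k. ball x \<epsilon>)" if \<epsilon>: "\<epsilon> > 0" for \<epsilon>
  proof -
    obtain N where N: "(1/2::real)^N < \<epsilon>/12" using real_arch_pow_inv[of "\<epsilon>/12" "1/2"] \<epsilon> by auto
    obtain k where k: "finite k" "H N \<subseteq> (\<Union>x\<in>k. ball x (\<epsilon>/3))"
      using Hc[of N] \<epsilon> unfolding compact_eq_totally_bounded by (meson divide_pos_pos zero_less_numeral)
    have "T ` S0 \<subseteq> (\<Union>x\<in>k. cball x (2*\<epsilon>/3))"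
    proof
      fix z assume "z \<in> T ` S0"
      then obtain x where x: "x \<in> S0" "z = T x" by auto
      obtain h where h: "h \<in> H N" "norm (T x - h) \<le> 4 * (1/2)^N" using approx[OF x(1)] by blast
      obtain x0 where x0: "x0 \<in> k" "dist x0 h < \<epsilon>/3" using k(2) h(1) by auto
      have "dist x0 z \<le> dist x0 h + dist h z" by (rule dist_triangle)
      also have "dist h z = norm (T x - h)" using x(2) by (simp add: dist_norm norm_minus_commute)
      finally have "dist x0 z \<le> 2*\<epsilon>/3" using x0 h(2) N by linarith
      then show "z \<in> (\<Union>x\<in>k. cball x (2*\<epsilon>/3))" using x0(1) by auto
    qed
    moreover have "closed (\<Union>x\<in>k. cball x (2*\<epsilon>/3))" using k(1) by (intro closed_UN) auto
    ultimately have "closure (T ` S0) \<subseteq> (\<Union>x\<in>k. cball x (2*\<epsilon>/3))" by (rule closure_minimal)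
    also have "\<dots> \<subseteq> (\<Union>x\<in>k. ball x \<epsilon>)"
    proof (rule UN_mono)
      fix x show "cball x (2*\<epsilon>/3) \<subseteq> ball x \<epsilon>" using \<epsilon> by (auto simp: subset_eq mem_cball mem_ball)
    qed simp
    finally show ?thesis using k(1) by blast
  qed
  have cc: "compact (closure (T ` S0))" unfolding compact_eq_totally_bounded
    using tb complete_eq_closed closed_closure by blast
  have inc: "T ` (G \<inter> cball 0 1) \<subseteq> closure (T ` S0)"
  proof
    fix z assume "z \<in> T ` (G \<inter> cball 0 1)"
    then obtain x where x: "x \<in> G" "norm x \<le> 1" "z = T x" by auto
    show "z \<in> closure (T ` S0)" unfolding closure_approachable
    proof (intro allI impI)
      fix \<epsilon> :: real assume \<epsilon>: "\<epsilon> > 0"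
      define \<delta> where "\<delta> = \<epsilon> / (2*K)"
      have \<delta>: "\<delta> > 0" using \<epsilon> K by (simp add: \<delta>_def)
      obtain y where y: "y \<in> span (range g)" "dist y x < \<delta>"
        using x(1) \<delta> unfolding G_def closure_approachable by blast
      define y' where "y' = (1/(1+\<delta>)) *\<^sub>R y"
      have ny: "norm y \<le> 1 + \<delta>"
        using norm_triangle_sub[of y x] x(2) y(2) by (simp add: dist_norm)
      have y'S: "y' \<in> S0"
      proof -
        have "norm y' = norm y / (1+\<delta>)" using \<delta> by (simp add: y'_def)
        also have "\<dots> \<le> 1" using ny \<delta> by simp
        finally show ?thesis unfolding S0_def y'_def using y(1) by (auto intro: span_scale)
      qed
      have sc: "1/(1+\<delta>) - 1 = -(\<delta>/(1+\<delta>))" using \<delta> by (simp add: field_simps)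
      have "y' - y = (1/(1+\<delta>) - 1) *\<^sub>R y" by (simp add: y'_def scaleR_diff_left)
      then have "norm (y' - y) = \<delta>/(1+\<delta>) * norm y" using \<delta> unfolding sc by simp
      also have "\<dots> \<le> \<delta>/(1+\<delta>) * (1+\<delta>)" using ny \<delta> by (intro mult_left_mono) auto
      also have "\<dots> = \<delta>" using \<delta> by simp
      finally have 1: "norm (y' - y) \<le> \<delta>" .
      have "norm (y' - x) \<le> norm (y' - y) + norm (y - x)" using norm_triangle_ineq[of "y' - y" "y - x"] by simp
      then have 2: "norm (y' - x) < 2 * \<delta>" using 1 y(2) by (simp add: dist_norm)
      have "dist (T y') z = norm (T (y' - x))" using x(3) by (simp add: dist_norm T.diff)
      also have "\<dots> \<le> norm (y' - x) * K" by (rule K(2))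
      also have "\<dots> < 2 * \<delta> * K" using 2 K(1) by (rule mult_strict_right_mono)
      also have "\<dots> = \<epsilon>" using K(1) by (simp add: \<delta>_def)
      finally show "\<exists>z'\<in>T ` S0. dist z' z < \<epsilon>" using y'S by blast
    qed
  qed
  have "closure (T ` (G \<inter> cball 0 1)) \<subseteq> closure (T ` S0)"
    by (rule closure_minimal[OF inc closed_closure])
  then have "closure (T ` (G \<inter> cball 0 1)) = closure (T ` S0) \<inter> closure (T ` (G \<inter> cball 0 1))" by blast
  then have "compact (closure (T ` (G \<inter> cball 0 1)))" using compact_Int_closed[OF cc closed_closure] by metis
  then have "compact_on G T" by (simp add: compact_on_def)
  then show ?thesis using dg g0 cs nd unfolding G_def by blast
qed

lemma normalized_ad:
  fixes f :: "nat \<Rightarrow> 'a::banach_lattice"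
  assumes df: "disjoint_seq f" and nz: "\<And>n. f n \<noteq> 0"
  shows "almost_disjoint (\<lambda>n. (1 / norm (f n)) *\<^sub>R f n)"
proof -
  define w where "w n = (1 / norm (f n)) *\<^sub>R f n" for n
  have nw: "norm (w k) = 1" for k unfolding w_def using nz[of k] by simp
  have dw: "disjoint_seq w" unfolding disjoint_seq_def w_def
  proof (intro allI impI)
    fix n m :: nat assume "n \<noteq> m"
    then have "inf (lmod (f n)) (lmod (f m)) = 0" using df by (simp add: disjoint_seq_def)
    then show "inf (lmod ((1 / norm (f n)) *\<^sub>R f n)) (lmod ((1 / norm (f m)) *\<^sub>R f m)) = 0"
      by (rule inf_lmod_scale_zero)
  qed
  have "almost_disjoint w" unfolding almost_disjoint_def
    using nw dw by (intro conjI allI exI[of _ w]) auto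
  then show ?thesis by (simp add: w_def[abs_def])
qed

theorem mainTheorem9:
  fixes T :: "'a::banach_lattice \<Rightarrow> 'b::banach"
  assumes "bounded_linear T"
  shows "(DNS T \<longleftrightarrow> \<not> (\<exists>f. almost_disjoint f \<and> (\<lambda>n. norm (T (f n))) \<longlonglongrightarrow> 0))
    \<and> (\<not> (\<exists>f. almost_disjoint f \<and> (\<lambda>n. norm (T (f n))) \<longlonglongrightarrow> 0) \<longleftrightarrow>
         \<not> (\<exists>E. closed_subspace E \<and> \<not> dispersed E \<and> compact_on E T))
    \<and> (\<not> (\<exists>E. closed_subspace E \<and> \<not> dispersed E \<and> compact_on E T) \<longleftrightarrow>
         \<not> (\<exists>E. closed_subspace E \<and> \<not> dispersed E \<and> strictly_singular_on E T))"
proof -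
  note T = assms
  let ?A = "\<exists>f. almost_disjoint f \<and> (\<lambda>n. norm (T (f n))) \<longlonglongrightarrow> 0"
  let ?C = "\<exists>E. closed_subspace E \<and> \<not> dispersed E \<and> compact_on E T"
  let ?S = "\<exists>E. closed_subspace E \<and> \<not> dispersed E \<and> strictly_singular_on E T"
  have A_imp: "?C \<and> \<not> DNS T" if A: ?A
  proof -
    from A obtain e where e: "almost_disjoint e" "(\<lambda>n. norm (T (e n))) \<longlonglongrightarrow> 0" by blast
    from A_gives_compact[OF T e] obtain g where g: "disjoint_seq g" "\<forall>n. g n \<noteq> 0"
      "compact_on (closure (span (range g))) T" "closed_subspace (closure (span (range g)))"
      "\<not> dispersed (closure (span (range g)))" by blast
    have "?C" using g by blast
    moreover have "strictly_singular_on (closure (span (range g))) T"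
      by (rule compact_imp_ss[OF T g(3)])
    then have "\<not> DNS T" using g(1,2) unfolding DNS_def by blast
    ultimately show ?thesis by blast
  qed
  have S_imp: ?A if S: ?S
  proof -
    from S obtain E where E: "closed_subspace E" "\<not> dispersed E" "strictly_singular_on E T" by blast
    from E(2) obtain e where e: "\<forall>n. e n \<in> E" "almost_disjoint e" unfolding dispersed_def by blast
    have "subspace E" using E(1) by (simp add: closed_subspace_def)
    then show ?thesis using ss_gives_seq[OF T _ _ e(2) E(3)] e(1) by blast
  qed
  have C_imp: ?S if C: ?C
  proof -
    from C obtain E where E: "closed_subspace E" "\<not> dispersed E" "compact_on E T" by blast
    then show ?thesis using compact_imp_ss[OF T E(3)] by blast
  qed
  have nDNS_imp: ?A if nd: "\<not> DNS T"
  proof -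
    from nd obtain f where f: "disjoint_seq f" "\<forall>n. f n \<noteq> 0"
      "strictly_singular_on (closure (span (range f))) T" unfolding DNS_def by blast
    let ?G = "closure (span (range f))"
    have G: "subspace ?G" by (intro subspace_closure' subspace_span)
    have eG: "(1 / norm (f n)) *\<^sub>R f n \<in> ?G" for n
      by (rule subsetD[OF closure_subset]) (intro span_scale span_base rangeI)
    have ad: "almost_disjoint (\<lambda>n. (1 / norm (f n)) *\<^sub>R f n)"
      using normalized_ad[OF f(1)] f(2) by blast
    show ?thesis by (rule ss_gives_seq[OF T G eG ad f(3)])
  qed
  show ?thesis using A_imp S_imp C_imp nDNS_imp by blast
qed

end
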